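(* Let $p$ be a prime, $n\ge 1$ an integer, $\mathbb{F}=\mathbb{F}_{p^n}$ and $F=|\mathbb{F}|=p^n$. Let $\theta,\gamma$ be real numbers. Suppose $f,g:\mathbb{F}\to[0,1]$ satisfy $f(m)\ge g(m)\ge 0$ for all $m\in\mathbb{F}$, and $\mathbb{E}(f)\ge \mathbb{E}(g)\ge F^{-\theta}$. If $$\|\hat f\|_{1/3}<F^{1+\gamma},$$ then $$\Lambda_3(f,g,f)\ \ge\ 10^{-10}p^{-8}F^{-12\theta-4\gamma}\quad\text{and}\quad \Lambda_3(g,f,f)\ \ge\ 10^{-10}p^{-8}F^{-12\theta-4\gamma}.$$
   Context: For $h:\mathbb{F}\to\mathbb{C}$, $\mathbb{E}(h)=F^{-1}\sum_{m\in\mathbb{F}}h(m)$. Identify $\mathbb{F}$ with $\mathbb{F}_p^n$ via a fixed standard $\mathbb{F}_p$-basis, and let $a\cdot m$ be the dot product with respect to this basis. With $\omega=e^{2\pi i/p}$, the Fourier transform is $\hat h(a)=\sum_{m\in\mathbb{F}}h(m)\omega^{a\cdot m}$. For $t>0$, $\|\hat h\|_t=\left(\sum_{a\in\mathbb{F}}|\hat h(a)|^t\right)^{1/t}$ (a quasinorm for $t<1$). For $f_1,f_2,f_3:\mathbb{F}\to\mathbb{C}$, $\Lambda_3(f_1,f_2,f_3)=F^{-2}\sum_{m,d\in\mathbb{F}}f_1(m)f_2(m+d)f_3(m+2d)$. *)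

theory Defs
  imports "HOL-Analysis.Analysis"
begin

text \<open>The field F_{p^n}, identified (as an additive group) with F_p^n via a fixed
basis.  Vectors are coordinate functions nat => int, with coordinates i < n in
{0..p-1} and all other coordinates 0.\<close>

definition vecs :: "nat \<Rightarrow> nat \<Rightarrow> (nat \<Rightarrow> int) set" where
  "vecs p n = {v. (\<forall>i<n. 0 \<le> v i \<and> v i < int p) \<and> (\<forall>i\<ge>n. v i = 0)}"

definition vadd :: "nat \<Rightarrow> nat \<Rightarrow> (nat \<Rightarrow> int) \<Rightarrow> (nat \<Rightarrow> int) \<Rightarrow> (nat \<Rightarrow> int)" where
  "vadd p n u v = (\<lambda>i. if i < n then (u i + v i) mod int p else 0)"

definition dotp :: "nat \<Rightarrow> (nat \<Rightarrow> int) \<Rightarrow> (nat \<Rightarrow> int) \<Rightarrow> int" where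
  "dotp n a m = (\<Sum>i<n. a i * m i)"

definition omega :: "nat \<Rightarrow> complex" where
  "omega p = exp (2 * of_real pi * \<i> / of_nat p)"

definition expect :: "nat \<Rightarrow> nat \<Rightarrow> ((nat \<Rightarrow> int) \<Rightarrow> real) \<Rightarrow> real" where
  "expect p n h = (\<Sum>m\<in>vecs p n. h m) / real (p ^ n)"

definition fourier :: "nat \<Rightarrow> nat \<Rightarrow> ((nat \<Rightarrow> int) \<Rightarrow> real) \<Rightarrow> (nat \<Rightarrow> int) \<Rightarrow> complex" where
  "fourier p n h a = (\<Sum>m\<in>vecs p n. of_real (h m) * omega p powi (dotp n a m))"

definition fnorm :: "nat \<Rightarrow> nat \<Rightarrow> real \<Rightarrow> ((nat \<Rightarrow> int) \<Rightarrow> real) \<Rightarrow> real" where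
  "fnorm p n t h = (\<Sum>a\<in>vecs p n. cmod (fourier p n h a) powr t) powr (1 / t)"

definition Lambda3 :: "nat \<Rightarrow> nat \<Rightarrow> ((nat \<Rightarrow> int) \<Rightarrow> real) \<Rightarrow> ((nat \<Rightarrow> int) \<Rightarrow> real)
    \<Rightarrow> ((nat \<Rightarrow> int) \<Rightarrow> real) \<Rightarrow> real" where
  "Lambda3 p n f1 f2 f3 =
     (\<Sum>m\<in>vecs p n. \<Sum>d\<in>vecs p n.
        f1 m * f2 (vadd p n m d) * f3 (vadd p n m (vadd p n d d))) / real (p ^ n) ^ 2"

end

theory Submission imports Defs "HOL-Library.FuncSet" begin

definition chi :: "nat \<Rightarrow> nat \<Rightarrow> (nat \<Rightarrow> int) \<Rightarrow> (nat \<Rightarrow> int) \<Rightarrow> complex" where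
  "chi p n u x = omega p powi (dotp n u x)"

lemma omega_nz: "omega p \<noteq> 0" by (simp add: omega_def)

lemma omega_powi: "omega p powi k = exp (2 * of_real pi * \<i> * of_int k / of_nat p)"
  unfolding omega_def exp_power_int by (simp add: field_simps)

lemma omega_powi_1_iff:
  assumes "p > 0" shows "omega p powi k = 1 \<longleftrightarrow> int p dvd k"
proof -
  have "omega p powi k = 1 \<longleftrightarrow> (\<exists>m::int. 2 * pi * k / p = of_int (2 * m) * pi)"
    unfolding omega_powi exp_eq_1 using assms by (simp add: field_simps)
  also have "\<dots> \<longleftrightarrow> (\<exists>m::int. k = m * p)"
  proof
    assume "\<exists>m::int. 2 * pi * k / p = of_int (2 * m) * pi"
    then obtain m :: int where "2 * pi * k / p = of_int (2 * m) * pi" by blast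
    hence "real_of_int k = real_of_int (m * p)" using assms pi_gt_zero
      by (simp add: field_simps)
    thus "\<exists>m::int. k = m * p" by (intro exI[of _ m]) (simp only: of_int_eq_iff)
  next
    assume "\<exists>m::int. k = m * p"
    then obtain m :: int where "k = m * p" by blast
    thus "\<exists>m::int. 2 * pi * k / p = of_int (2 * m) * pi"
      using assms by (intro exI[of _ m]) (simp add: field_simps)
  qed
  also have "\<dots> \<longleftrightarrow> int p dvd k" by (auto simp: dvd_def mult.commute)
  finally show ?thesis .
qed

lemma omega_powi_cong:
  assumes "p > 0" "int p dvd (k - l)" shows "omega p powi k = omega p powi l"
proof -
  have "omega p powi k = omega p powi (k - l) * omega p powi l"
    using power_int_add[of "omega p" "k - l" l] omega_nz by simp
  also have "omega p powi (k - l) = 1" using omega_powi_1_iff assms by blast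
  finally show ?thesis by simp
qed

lemma cmod_omega_powi: "cmod (omega p powi k) = 1"
  unfolding omega_powi by (simp add: norm_exp_eq_Re)


lemma dotp_add: "dotp n (\<lambda>i. u i + v i) x = dotp n u x + dotp n v x"
  by (simp add: dotp_def algebra_simps sum.distrib)

lemma dotp_sym: "dotp n u x = dotp n x u"
  by (simp add: dotp_def mult.commute)

lemma chi_mult: "chi p n u x * chi p n v x = chi p n (\<lambda>i. u i + v i) x"
  unfolding chi_def dotp_add using power_int_add[of "omega p"] omega_nz by metis

lemma chi_sym: "chi p n u x = chi p n x u"
  unfolding chi_def using dotp_sym by metis

lemma cmod_chi: "cmod (chi p n u x) = 1"
  unfolding chi_def by (rule cmod_omega_powi)

lemma chi_zero_freq: "chi p n (\<lambda>i. 0) x = 1"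
  by (simp add: chi_def dotp_def)

lemma chi_neg: "chi p n u x * chi p n (\<lambda>i. - u i) x = 1"
  using chi_mult[of p n u x "\<lambda>i. - u i"] chi_zero_freq by simp

lemma chi_vadd:
  assumes "p > 0"
  shows "chi p n u (vadd p n x y) = chi p n u x * chi p n u y"
proof -
  have "int p dvd (dotp n u (vadd p n x y) - (dotp n u x + dotp n u y))"
  proof -
    have "dotp n u (vadd p n x y) - (dotp n u x + dotp n u y)
        = (\<Sum>i<n. u i * ((x i + y i) mod int p - (x i + y i)))"
      by (simp add: dotp_def vadd_def algebra_simps sum_subtractf sum.distrib)
    also have "int p dvd \<dots>"
    proof (rule dvd_sum)
      fix i
      have "int p dvd ((x i + y i) mod int p - (x i + y i))"
        by (metis mod_mod_trivial mod_eq_dvd_iff)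
      thus "int p dvd u i * ((x i + y i) mod int p - (x i + y i))" by simp
    qed
    finally show ?thesis .
  qed
  hence "chi p n u (vadd p n x y) = omega p powi (dotp n u x + dotp n u y)"
    unfolding chi_def using omega_powi_cong assms by blast
  thus ?thesis unfolding chi_def using power_int_add[of "omega p"] omega_nz by metis
qed

lemma vadd_in: assumes "p > 0" shows "vadd p n x y \<in> vecs p n"
  using assms by (auto simp: vadd_def vecs_def)

lemma zero_in: assumes "p > 0" shows "(\<lambda>i. 0) \<in> vecs p n"
  using assms by (simp add: vecs_def)

lemma finite_vecs: "finite (vecs p n)"
proof -
  have "vecs p n \<subseteq> (\<lambda>f. \<lambda>i. if i < n then f i else 0) ` (PiE {..<n} (\<lambda>_. {0..<int p}))"
  proof
    fix v assume v: "v \<in> vecs p n"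
    show "v \<in> (\<lambda>f. \<lambda>i. if i < n then f i else 0) ` (PiE {..<n} (\<lambda>_. {0..<int p}))"
    proof
      show "restrict v {..<n} \<in> PiE {..<n} (\<lambda>_. {0..<int p})" using v by (auto simp: vecs_def)
      show "v = (\<lambda>i. if i < n then restrict v {..<n} i else 0)" using v by (auto simp: vecs_def)
    qed
  qed
  thus ?thesis by (rule finite_subset) (intro finite_imageI finite_PiE, auto)
qed

lemma card_vecs: "card (vecs p n) = p ^ n"
proof -
  let ?h = "\<lambda>f. \<lambda>i. if i < n then f i else (0::int)"
  let ?P = "PiE {..<n} (\<lambda>_. {0..<int p})"
  have "bij_betw ?h ?P (vecs p n)"
  proof (rule bij_betwI[where g = "\<lambda>v. restrict v {..<n}"])
    show "?h \<in> ?P \<rightarrow> vecs p n" by (auto simp: vecs_def PiE_def)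
    show "(\<lambda>v. restrict v {..<n}) \<in> vecs p n \<rightarrow> ?P" by (auto simp: vecs_def)
    show "restrict (?h x) {..<n} = x" if "x \<in> ?P" for x
      using that by (auto simp: PiE_def extensional_def)
    show "?h (restrict y {..<n}) = y" if "y \<in> vecs p n" for y
      using that by (auto simp: vecs_def)
  qed
  hence "card (vecs p n) = card ?P" by (simp add: bij_betw_same_card)
  also have "\<dots> = p ^ n" by (simp add: card_PiE)
  finally show ?thesis .
qed

lemma vadd_inj:
  assumes "p > 0" "x \<in> vecs p n" "y \<in> vecs p n" "vadd p n x t = vadd p n y t"
  shows "x = y"
proof
  fix i
  show "x i = y i"
  proof (cases "i < n")
    case True
    have "(x i + t i) mod int p = (y i + t i) mod int p"
      using assms(4) True unfolding vadd_def by meson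
    hence "int p dvd (x i + t i) - (y i + t i)" by (simp only: mod_eq_dvd_iff)
    hence "int p dvd x i - y i" by simp
    hence "x i mod int p = y i mod int p" by (simp only: mod_eq_dvd_iff)
    moreover have "x i mod int p = x i" "y i mod int p = y i"
      using assms(2,3) True by (auto simp: vecs_def)
    ultimately show ?thesis by simp
  next
    case False thus ?thesis using assms(2,3) by (auto simp: vecs_def)
  qed
qed

lemma sum_translate:
  assumes "p > 0"
  shows "(\<Sum>m\<in>vecs p n. h (vadd p n m t)) = (\<Sum>m\<in>vecs p n. h m)"
proof -
  have inj: "inj_on (\<lambda>m. vadd p n m t) (vecs p n)"
    using vadd_inj[OF assms] by (auto simp: inj_on_def)
  have img: "(\<lambda>m. vadd p n m t) ` vecs p n = vecs p n"
    by (rule endo_inj_surj[OF finite_vecs _ inj]) (auto simp: vadd_in assms)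
  show ?thesis using sum.reindex[OF inj, of h] img by simp
qed


lemma vecs_eq_mod:
  assumes "p > 0" "x \<in> vecs p n" "y \<in> vecs p n" "\<forall>i<n. int p dvd (x i - y i)"
  shows "x = y"
proof
  fix i
  show "x i = y i"
  proof (cases "i < n")
    case True
    hence "x i mod int p = y i mod int p" using assms(4) by (simp only: mod_eq_dvd_iff)
    moreover have "x i mod int p = x i" "y i mod int p = y i"
      using assms(2,3) True by (auto simp: vecs_def)
    ultimately show ?thesis by simp
  next
    case False thus ?thesis using assms(2,3) by (auto simp: vecs_def)
  qed
qed

lemma card_unique:
  assumes "p > 0"
  shows "card {e \<in> vecs p n. \<forall>i<n. int p dvd (w i + e i)} \<le> 1"
proof -
  have "\<forall>a\<in>{e \<in> vecs p n. \<forall>i<n. int p dvd (w i + e i)}. \<forall>b\<in>{e \<in> vecs p n. \<forall>i<n. int p dvd (w i + e i)}. a = b"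
  proof (intro ballI)
    fix a b assume a: "a \<in> {e \<in> vecs p n. \<forall>i<n. int p dvd (w i + e i)}"
      and b: "b \<in> {e \<in> vecs p n. \<forall>i<n. int p dvd (w i + e i)}"
    have "\<forall>i<n. int p dvd (a i - b i)"
    proof (intro allI impI)
      fix i assume "i < n"
      hence "int p dvd (w i + a i) - (w i + b i)" using a b by (intro dvd_diff) auto
      thus "int p dvd (a i - b i)" by simp
    qed
    thus "a = b" using vecs_eq_mod[OF assms] a b by blast
  qed
  thus ?thesis using card_le_Suc0_iff_eq[of "{e \<in> vecs p n. \<forall>i<n. int p dvd (w i + e i)}"]
    finite_vecs by simp
qed

lemma orth:
  assumes "p > 1"
  shows "(\<Sum>a\<in>vecs p n. chi p n u a) = (if \<forall>i<n. int p dvd u i then of_nat (p ^ n) else 0)"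
proof (cases "\<forall>i<n. int p dvd u i")
  case True
  have "chi p n u a = 1" for a
  proof -
    have "int p dvd dotp n u a" unfolding dotp_def using True by (intro dvd_sum) simp
    thus ?thesis unfolding chi_def using omega_powi_1_iff assms by simp
  qed
  thus ?thesis using True card_vecs[of p n] by simp
next
  case False
  then obtain k where k: "k < n" "\<not> int p dvd u k" by blast
  define t where "t = (\<lambda>i. if i = k then 1 else (0::int))"
  have ct: "chi p n u t = omega p powi (u k)"
  proof -
    have "dotp n u t = (\<Sum>i<n. if i = k then u k else 0)"
      unfolding dotp_def t_def by (intro sum.cong) auto
    also have "\<dots> = u k" using k by simp
    finally show ?thesis by (simp add: chi_def)
  qed
  have ne: "chi p n u t \<noteq> 1" using ct omega_powi_1_iff assms k by simp
  let ?S = "\<Sum>a\<in>vecs p n. chi p n u a"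
  have "?S = (\<Sum>a\<in>vecs p n. chi p n u (vadd p n a t))"
    using sum_translate[where h="chi p n u" and t=t and p=p and n=n] assms by simp
  also have "\<dots> = ?S * chi p n u t"
    using chi_vadd[of p n u _ t] assms by (simp add: sum_distrib_right)
  finally have "?S * (chi p n u t - 1) = 0" by (simp add: algebra_simps)
  hence "?S = 0" using ne by simp
  thus ?thesis using False by auto
qed

lemma inversion:
  assumes "p > 1" "x \<in> vecs p n"
  shows "complex_of_real (h x) =
    (\<Sum>a\<in>vecs p n. fourier p n h a * chi p n (\<lambda>i. - a i) x) / of_nat (p ^ n)"
proof -
  have "(\<Sum>a\<in>vecs p n. fourier p n h a * chi p n (\<lambda>i. - a i) x)
      = (\<Sum>a\<in>vecs p n. \<Sum>m\<in>vecs p n. of_real (h m) * (chi p n a m * chi p n (\<lambda>i. - a i) x))"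
    unfolding fourier_def chi_def[symmetric] by (simp add: sum_distrib_right mult.assoc)
  also have "\<dots> = (\<Sum>m\<in>vecs p n. of_real (h m) * (\<Sum>a\<in>vecs p n. chi p n (\<lambda>i. m i - x i) a))"
  proof -
    have "chi p n a m * chi p n (\<lambda>i. - a i) x = chi p n (\<lambda>i. m i - x i) a" for a m
    proof -
      have "dotp n a m + dotp n (\<lambda>i. - a i) x = dotp n (\<lambda>i. m i - x i) a"
        by (simp add: dotp_def sum.distrib[symmetric] algebra_simps sum_subtractf[symmetric])
      thus ?thesis unfolding chi_def using power_int_add[of "omega p"] omega_nz by metis
    qed
    hence "(\<Sum>a\<in>vecs p n. \<Sum>m\<in>vecs p n. of_real (h m) * (chi p n a m * chi p n (\<lambda>i. - a i) x))
       = (\<Sum>a\<in>vecs p n. \<Sum>m\<in>vecs p n. of_real (h m) * chi p n (\<lambda>i. m i - x i) a)" by simp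
    also have "\<dots> = (\<Sum>m\<in>vecs p n. \<Sum>a\<in>vecs p n. of_real (h m) * chi p n (\<lambda>i. m i - x i) a)"
      by (rule sum.swap)
    finally show ?thesis by (simp add: sum_distrib_left)
  qed
  also have "\<dots> = (\<Sum>m\<in>vecs p n. if m = x then of_real (h m) * of_nat (p ^ n) else 0)"
  proof (intro sum.cong refl)
    fix m assume m: "m \<in> vecs p n"
    have "(\<forall>i<n. int p dvd (m i - x i)) \<longleftrightarrow> m = x"
      using vecs_eq_mod[where x=m and y=x and p=p and n=n] m assms by auto
    thus "of_real (h m) * (\<Sum>a\<in>vecs p n. chi p n (\<lambda>i. m i - x i) a)
        = (if m = x then of_real (h m) * of_nat (p ^ n) else 0)"
      using orth[of p n "\<lambda>i. m i - x i"] assms by auto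
  qed
  also have "\<dots> = of_real (h x) * of_nat (p ^ n)" using assms finite_vecs by simp
  finally show ?thesis using assms by simp
qed


lemma powr_add_le:
  fixes x y r :: real
  assumes "0 \<le> x" "0 \<le> y" "0 < r" "r \<le> 1"
  shows "(x + y) powr r \<le> x powr r + y powr r"
proof (cases "x + y = 0")
  case True thus ?thesis using assms by simp
next
  case False
  define s where "s = x + y"
  have s: "s > 0" using False assms unfolding s_def by simp
  have hx: "x / s \<le> (x / s) powr r"
    using powr_mono'[of r 1 "x / s"] assms s unfolding s_def by (simp add: divide_le_eq_1)
  have hy: "y / s \<le> (y / s) powr r"
    using powr_mono'[of r 1 "y / s"] assms s unfolding s_def by (simp add: divide_le_eq_1)
  have "1 = x / s + y / s" using s unfolding s_def by (simp add: add_divide_distrib[symmetric])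
  also have "\<dots> \<le> (x powr r + y powr r) / s powr r" using hx hy by (simp add: powr_divide add_divide_distrib)
  finally have "s powr r \<le> x powr r + y powr r" using s by (simp add: field_simps)
  thus ?thesis unfolding s_def .
qed

lemma powr_sum_le:
  fixes r :: real
  assumes "finite A" "\<And>a. a \<in> A \<Longrightarrow> 0 \<le> h a" "0 < r" "r \<le> 1"
  shows "(\<Sum>a\<in>A. h a) powr r \<le> (\<Sum>a\<in>A. h a powr r)"
  using assms
proof (induction A rule: finite_induct)
  case empty thus ?case by simp
next
  case (insert a A)
  have "(\<Sum>a\<in>insert a A. h a) powr r = (h a + (\<Sum>a\<in>A. h a)) powr r" using insert by simp
  also have "\<dots> \<le> h a powr r + (\<Sum>a\<in>A. h a) powr r"
    using insert by (intro powr_add_le) (auto intro: sum_nonneg)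
  also have "\<dots> \<le> h a powr r + (\<Sum>a\<in>A. h a powr r)" using insert by simp
  finally show ?case using insert by simp
qed

lemma cmod_sum_powr_le:
  fixes r :: real
  assumes "finite A" "0 < r" "r \<le> 1"
  shows "cmod (\<Sum>a\<in>A. z a) powr r \<le> (\<Sum>a\<in>A. cmod (z a) powr r)"
proof -
  have "cmod (\<Sum>a\<in>A. z a) powr r \<le> (\<Sum>a\<in>A. cmod (z a)) powr r"
    using assms by (intro powr_mono2) (auto intro: norm_sum)
  also have "\<dots> \<le> (\<Sum>a\<in>A. cmod (z a) powr r)" using assms by (intro powr_sum_le) auto
  finally show ?thesis .
qed


lemma core:
  fixes P :: "(nat \<Rightarrow> int) \<Rightarrow> real"
    and G :: "(nat \<Rightarrow> int) \<Rightarrow> (nat \<Rightarrow> int) \<Rightarrow> (nat \<Rightarrow> int) \<Rightarrow> complex"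
  assumes p: "p > 1"
    and Pnn: "\<And>d. d \<in> vecs p n \<Longrightarrow> 0 \<le> P d"
    and hQ: "\<And>e. e \<in> vecs p n \<Longrightarrow> (\<Sum>d\<in>vecs p n. of_real (P d) * chi p n e d)
        = (\<Sum>a\<in>vecs p n. \<Sum>b\<in>vecs p n. fourier p n f a * fourier p n f b * G a b e)
          / of_real (real (p ^ n) ^ 2)"
    and hG: "\<And>a b. a \<in> vecs p n \<Longrightarrow> b \<in> vecs p n \<Longrightarrow>
        (\<Sum>e\<in>vecs p n. cmod (G a b e) powr (1/3)) \<le> C"
  shows "real (p ^ n) * P (\<lambda>i. 0) \<le> real (p ^ n) powr (-2/3) * C
     * (\<Sum>a\<in>vecs p n. cmod (fourier p n f a) powr (1/3)) ^ 2 * (\<Sum>d\<in>vecs p n. P d) powr (2/3)"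
proof -
  define V where "V = vecs p n"
  define N where "N = real (p ^ n)"
  define Q where "Q e = (\<Sum>d\<in>V. of_real (P d) * chi p n e d)" for e
  define Ls where "Ls = (\<Sum>d\<in>V. P d)"
  define S where "S = (\<Sum>a\<in>V. cmod (fourier p n f a) powr (1/3))"
  define r :: real where "r = 1/3"
  have finV: "finite V" unfolding V_def by (rule finite_vecs)
  have p0: "p > 0" using p by simp
  have Npos: "N > 0" unfolding N_def using p by simp
  have zV: "(\<lambda>i. 0) \<in> V" unfolding V_def using zero_in p0 by blast
  have Lsnn: "Ls \<ge> 0" unfolding Ls_def V_def using Pnn by (intro sum_nonneg) auto
  have s1: "(\<Sum>e\<in>V. Q e) = of_real (N * P (\<lambda>i. 0))"
  proof -
    have "(\<Sum>e\<in>V. Q e) = (\<Sum>e\<in>V. \<Sum>d\<in>V. of_real (P d) * chi p n d e)"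
      unfolding Q_def by (intro sum.cong refl) (subst chi_sym, rule refl)
    also have "\<dots> = (\<Sum>d\<in>V. \<Sum>e\<in>V. of_real (P d) * chi p n d e)" by (rule sum.swap)
    also have "\<dots> = (\<Sum>d\<in>V. if d = (\<lambda>i. 0) then of_real (P d * N) else 0)"
    proof (intro sum.cong refl)
      fix d assume d: "d \<in> V"
      have "(\<forall>i<n. int p dvd d i) \<longleftrightarrow> d = (\<lambda>i. 0)"
        using vecs_eq_mod[where x=d and y="\<lambda>i. 0" and p=p and n=n] d zV p0 unfolding V_def by auto
      thus "(\<Sum>e\<in>V. of_real (P d) * chi p n d e) = (if d = (\<lambda>i. 0) then of_real (P d * N) else 0)"
        using orth[OF p, of n d] unfolding V_def N_def by (simp add: sum_distrib_left[symmetric])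
    qed
    also have "\<dots> = of_real (N * P (\<lambda>i. 0))" using finV zV by (simp add: mult.commute)
    finally show ?thesis .
  qed
  have s2: "N * P (\<lambda>i. 0) \<le> (\<Sum>e\<in>V. cmod (Q e))"
  proof -
    have "N * P (\<lambda>i. 0) = cmod (of_real (N * P (\<lambda>i. 0)) :: complex)"
      using Npos Pnn zV unfolding V_def by (subst norm_of_real) simp
    also have "\<dots> = cmod (\<Sum>e\<in>V. Q e)" by (simp only: s1)
    also have "\<dots> \<le> (\<Sum>e\<in>V. cmod (Q e))" by (rule norm_sum)
    finally show ?thesis .
  qed
  have s3: "cmod (Q e) \<le> Ls" for e
  proof -
    have "cmod (Q e) \<le> (\<Sum>d\<in>V. cmod (of_real (P d) * chi p n e d))" unfolding Q_def by (rule norm_sum)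
    also have "\<dots> = Ls" unfolding Ls_def using Pnn unfolding V_def
      by (intro sum.cong refl) (simp add: norm_mult cmod_chi)
    finally show ?thesis .
  qed
  have s4: "cmod (Q e) \<le> cmod (Q e) powr r * Ls powr (2/3)" for e
  proof (cases "cmod (Q e) = 0")
    case True thus ?thesis by simp
  next
    case False
    hence "cmod (Q e) = cmod (Q e) powr (r + 2/3)" unfolding r_def by simp
    also have "\<dots> = cmod (Q e) powr r * cmod (Q e) powr (2/3)" by (simp add: powr_add)
    also have "\<dots> \<le> cmod (Q e) powr r * Ls powr (2/3)"
      using s3[of e] by (intro mult_left_mono powr_mono2) auto
    finally show ?thesis .
  qed
  have s5: "cmod (Q e) powr r \<le> N powr (-2/3) * (\<Sum>a\<in>V. \<Sum>b\<in>V.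
      (cmod (fourier p n f a) powr r * cmod (fourier p n f b) powr r) * cmod (G a b e) powr r)"
    if e: "e \<in> V" for e
  proof -
    let ?X = "\<lambda>a b. fourier p n f a * fourier p n f b * G a b e"
    have "cmod (Q e) = cmod (\<Sum>a\<in>V. \<Sum>b\<in>V. ?X a b) / N ^ 2"
      using hQ[of e] e unfolding Q_def V_def N_def by (simp add: norm_divide norm_power)
    hence "cmod (Q e) powr r = cmod (\<Sum>a\<in>V. \<Sum>b\<in>V. ?X a b) powr r / (N ^ 2) powr r"
      by (simp add: powr_divide)
    also have "(N ^ 2) powr r = N powr (2/3)"
    proof -
      have "N ^ 2 = N powr 2" using Npos by (simp add: powr_numeral)
      thus ?thesis unfolding r_def by (simp add: powr_powr)
    qed
    also have "cmod (\<Sum>a\<in>V. \<Sum>b\<in>V. ?X a b) powr r \<le> (\<Sum>a\<in>V. cmod (\<Sum>b\<in>V. ?X a b) powr r)"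
      using finV unfolding r_def by (intro cmod_sum_powr_le) auto
    also have "\<dots> \<le> (\<Sum>a\<in>V. \<Sum>b\<in>V. cmod (?X a b) powr r)"
      using finV unfolding r_def by (intro sum_mono cmod_sum_powr_le) auto
    also have "\<dots> = (\<Sum>a\<in>V. \<Sum>b\<in>V.
      (cmod (fourier p n f a) powr r * cmod (fourier p n f b) powr r) * cmod (G a b e) powr r)"
      by (simp add: norm_mult powr_mult)
    finally have "cmod (Q e) powr r \<le> (\<Sum>a\<in>V. \<Sum>b\<in>V.
      (cmod (fourier p n f a) powr r * cmod (fourier p n f b) powr r) * cmod (G a b e) powr r) / N powr (2/3)"
      using Npos by (simp add: divide_right_mono)
    thus ?thesis by (simp add: powr_minus_divide)
  qed
  have s6: "(\<Sum>e\<in>V. cmod (Q e) powr r) \<le> N powr (-2/3) * C * S ^ 2"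
  proof -
    have "(\<Sum>e\<in>V. cmod (Q e) powr r) \<le> (\<Sum>e\<in>V. N powr (-2/3) * (\<Sum>a\<in>V. \<Sum>b\<in>V.
      (cmod (fourier p n f a) powr r * cmod (fourier p n f b) powr r) * cmod (G a b e) powr r))"
      using s5 by (intro sum_mono) auto
    also have "\<dots> = N powr (-2/3) * (\<Sum>e\<in>V. \<Sum>a\<in>V. \<Sum>b\<in>V.
      (cmod (fourier p n f a) powr r * cmod (fourier p n f b) powr r) * cmod (G a b e) powr r)"
      by (simp add: sum_distrib_left)
    also have "(\<Sum>e\<in>V. \<Sum>a\<in>V. \<Sum>b\<in>V.
      (cmod (fourier p n f a) powr r * cmod (fourier p n f b) powr r) * cmod (G a b e) powr r)
      = (\<Sum>a\<in>V. \<Sum>e\<in>V. \<Sum>b\<in>V.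
      (cmod (fourier p n f a) powr r * cmod (fourier p n f b) powr r) * cmod (G a b e) powr r)"
      by (rule sum.swap)
    also have "\<dots> = (\<Sum>a\<in>V. \<Sum>b\<in>V. \<Sum>e\<in>V.
      (cmod (fourier p n f a) powr r * cmod (fourier p n f b) powr r) * cmod (G a b e) powr r)"
      by (intro sum.cong refl sum.swap)
    also have "\<dots> = (\<Sum>a\<in>V. \<Sum>b\<in>V.
      (cmod (fourier p n f a) powr r * cmod (fourier p n f b) powr r) * (\<Sum>e\<in>V. cmod (G a b e) powr r))"
      by (simp add: sum_distrib_left)
    also have "\<dots> \<le> (\<Sum>a\<in>V. \<Sum>b\<in>V.
      (cmod (fourier p n f a) powr r * cmod (fourier p n f b) powr r) * C)"
      using hG unfolding V_def r_def by (intro sum_mono mult_left_mono) auto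
    also have "\<dots> = C * S ^ 2"
      unfolding S_def r_def power2_eq_square by (simp add: sum_distrib_left sum_distrib_right mult_ac)
    finally show ?thesis using powr_ge_zero[of N "-2/3"] by (simp add: mult_left_mono mult.assoc) 
  qed
  have "N * P (\<lambda>i. 0) \<le> (\<Sum>e\<in>V. cmod (Q e) powr r * Ls powr (2/3))"
    using s2 s4 by (meson order_trans sum_mono)
  also have "\<dots> = (\<Sum>e\<in>V. cmod (Q e) powr r) * Ls powr (2/3)" by (simp add: sum_distrib_right)
  also have "\<dots> \<le> N powr (-2/3) * C * S ^ 2 * Ls powr (2/3)"
    using s6 by (intro mult_right_mono) auto
  finally show ?thesis unfolding N_def S_def Ls_def V_def r_def .
qed


lemma hG_gen:
  assumes p: "p > 1"
    and G: "\<And>e. e \<in> vecs p n \<Longrightarrow> G e = (if \<forall>i<n. int p dvd (w i + e i) then of_nat (p ^ n) * H else 0)"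
    and H: "cmod H \<le> B"
  shows "(\<Sum>e\<in>vecs p n. cmod (G e) powr (1/3)) \<le> (real (p ^ n) * B) powr (1/3)"
proof -
  let ?A = "vecs p n \<inter> {e. \<forall>i<n. int p dvd (w i + e i)}"
  have cA: "card ?A \<le> 1" using card_unique[of p n w] p by (simp add: Int_def)
  let ?X = "cmod (of_nat (p ^ n) * H) powr (1/3)"
  have "(\<Sum>e\<in>vecs p n. cmod (G e) powr (1/3)) = (\<Sum>e\<in>vecs p n. if \<forall>i<n. int p dvd (w i + e i) then ?X else 0)"
    using G by (intro sum.cong refl) auto
  also have "\<dots> = real (card ?A) * ?X" using finite_vecs by (simp add: sum.If_cases)
  also have "\<dots> \<le> 1 * ?X" using cA by (intro mult_right_mono) auto
  also have "\<dots> \<le> (real (p ^ n) * B) powr (1/3)"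
    using H by (simp add: norm_mult norm_power, intro powr_mono2 mult_left_mono) auto
  finally show ?thesis .
qed

lemma expand:
  fixes K :: "(nat \<Rightarrow> int) \<Rightarrow> (nat \<Rightarrow> int) \<Rightarrow> complex"
  assumes p: "p > 1"
    and ua: "\<And>m d. m \<in> vecs p n \<Longrightarrow> d \<in> vecs p n \<Longrightarrow> ua m d \<in> vecs p n"
    and ub: "\<And>m d. m \<in> vecs p n \<Longrightarrow> d \<in> vecs p n \<Longrightarrow> ub m d \<in> vecs p n"
  shows "(\<Sum>d\<in>vecs p n. \<Sum>m\<in>vecs p n. of_real (f (ua m d)) * of_real (f (ub m d)) * K m d)
    = (\<Sum>a\<in>vecs p n. \<Sum>b\<in>vecs p n. fourier p n f a * fourier p n f b *
        (\<Sum>d\<in>vecs p n. \<Sum>m\<in>vecs p n. chi p n (\<lambda>i. - a i) (ua m d) * chi p n (\<lambda>i. - b i) (ub m d) * K m d))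
      / of_real (real (p ^ n) ^ 2)"
proof -
  define V where "V = vecs p n"
  define N :: complex where "N = of_nat (p ^ n)"
  define Y where "Y a b d m = fourier p n f a * fourier p n f b *
     (chi p n (\<lambda>i. - a i) (ua m d) * chi p n (\<lambda>i. - b i) (ub m d) * K m d)" for a b d m
  have "(\<Sum>d\<in>V. \<Sum>m\<in>V. of_real (f (ua m d)) * of_real (f (ub m d)) * K m d)
      = (\<Sum>d\<in>V. \<Sum>m\<in>V. \<Sum>a\<in>V. \<Sum>b\<in>V. Y a b d m / N ^ 2)"
  proof (intro sum.cong refl)
    fix d m assume d: "d \<in> V" and m: "m \<in> V"
    have "of_real (f (ua m d)) * of_real (f (ub m d)) * K m d
      = (\<Sum>a\<in>V. fourier p n f a * chi p n (\<lambda>i. - a i) (ua m d)) / N *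
        ((\<Sum>b\<in>V. fourier p n f b * chi p n (\<lambda>i. - b i) (ub m d)) / N) * K m d"
      using inversion[OF p ua[OF m[unfolded V_def] d[unfolded V_def]], of f]
        inversion[OF p ub[OF m[unfolded V_def] d[unfolded V_def]], of f]
      unfolding V_def N_def by simp
    also have "\<dots> = ((\<Sum>a\<in>V. fourier p n f a * chi p n (\<lambda>i. - a i) (ua m d)) *
        (\<Sum>b\<in>V. fourier p n f b * chi p n (\<lambda>i. - b i) (ub m d))) * K m d / N ^ 2"
      by (simp add: power2_eq_square)
    also have "\<dots> = (\<Sum>a\<in>V. \<Sum>b\<in>V. (fourier p n f a * chi p n (\<lambda>i. - a i) (ua m d)) *
        (fourier p n f b * chi p n (\<lambda>i. - b i) (ub m d)) * K m d / N ^ 2)"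
      by (subst sum_product) (simp only: sum_distrib_right sum_divide_distrib)
    also have "\<dots> = (\<Sum>a\<in>V. \<Sum>b\<in>V. Y a b d m / N ^ 2)"
      unfolding Y_def by (intro sum.cong refl) (simp add: mult_ac)
    finally show "of_real (f (ua m d)) * of_real (f (ub m d)) * K m d = (\<Sum>a\<in>V. \<Sum>b\<in>V. Y a b d m / N ^ 2)" .
  qed
  also have "\<dots> = (\<Sum>d\<in>V. \<Sum>a\<in>V. \<Sum>m\<in>V. \<Sum>b\<in>V. Y a b d m / N ^ 2)"
    by (intro sum.cong refl sum.swap)
  also have "\<dots> = (\<Sum>d\<in>V. \<Sum>a\<in>V. \<Sum>b\<in>V. \<Sum>m\<in>V. Y a b d m / N ^ 2)"
    by (intro sum.cong refl sum.swap)
  also have "\<dots> = (\<Sum>a\<in>V. \<Sum>d\<in>V. \<Sum>b\<in>V. \<Sum>m\<in>V. Y a b d m / N ^ 2)"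
    by (rule sum.swap)
  also have "\<dots> = (\<Sum>a\<in>V. \<Sum>b\<in>V. \<Sum>d\<in>V. \<Sum>m\<in>V. Y a b d m / N ^ 2)"
    by (intro sum.cong refl sum.swap)
  also have "\<dots> = (\<Sum>a\<in>V. \<Sum>b\<in>V. fourier p n f a * fourier p n f b *
        (\<Sum>d\<in>V. \<Sum>m\<in>V. chi p n (\<lambda>i. - a i) (ua m d) * chi p n (\<lambda>i. - b i) (ub m d) * K m d)) / N ^ 2"
    unfolding Y_def by (simp add: sum_distrib_left sum_divide_distrib)
  finally show ?thesis unfolding V_def N_def by simp
qed


lemma G1_eq:
  assumes p: "p > 1"
  shows "(\<Sum>d\<in>vecs p n. \<Sum>m\<in>vecs p n. chi p n (\<lambda>i. - a i) m * chi p n (\<lambda>i. - b i) (vadd p n m (vadd p n d d))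
           * (of_real (g (vadd p n m d)) * chi p n e d))
    = (if \<forall>i<n. int p dvd ((a i - b i) + e i)
       then of_nat (p ^ n) * (\<Sum>y\<in>vecs p n. of_real (g y) * chi p n (\<lambda>i. - a i + - b i) y) else 0)"
proof -
  define c where "c = (\<lambda>i. - a i + - b i)"
  define w where "w = (\<lambda>i. (a i - b i) + e i)"
  define V where "V = vecs p n"
  have p0: "p > 0" using p by simp
  have trm: "chi p n (\<lambda>i. - a i) m * chi p n (\<lambda>i. - b i) (vadd p n m (vadd p n d d))
           * (of_real (g (vadd p n m d)) * chi p n e d)
      = (of_real (g (vadd p n m d)) * chi p n c (vadd p n m d)) * chi p n w d" for m d
  proof -
    have A: "chi p n (\<lambda>i. - b i) d * chi p n (\<lambda>i. - b i) d * chi p n e d = chi p n (\<lambda>i. - b i + - b i + e i) d"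
      by (simp add: chi_mult)
    have B: "chi p n c d * chi p n w d = chi p n (\<lambda>i. c i + w i) d" by (simp add: chi_mult)
    have C: "(\<lambda>i. - b i + - b i + e i) = (\<lambda>i. c i + w i)" by (auto simp: c_def w_def)
    have D: "chi p n (\<lambda>i. - a i) m * chi p n (\<lambda>i. - b i) m = chi p n c m" by (simp add: chi_mult c_def)
    have "chi p n (\<lambda>i. - a i) m * chi p n (\<lambda>i. - b i) (vadd p n m (vadd p n d d))
           * (of_real (g (vadd p n m d)) * chi p n e d)
        = of_real (g (vadd p n m d)) * (chi p n (\<lambda>i. - a i) m * chi p n (\<lambda>i. - b i) m) *
          (chi p n (\<lambda>i. - b i) d * chi p n (\<lambda>i. - b i) d * chi p n e d)"
      using chi_vadd[OF p0] by (simp add: mult_ac)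
    also have "\<dots> = of_real (g (vadd p n m d)) * chi p n c m * (chi p n c d * chi p n w d)"
      by (simp only: A B C D)
    also have "\<dots> = (of_real (g (vadd p n m d)) * chi p n c (vadd p n m d)) * chi p n w d"
      using chi_vadd[OF p0] by (simp add: mult_ac)
    finally show ?thesis .
  qed
  have "(\<Sum>d\<in>V. \<Sum>m\<in>V. chi p n (\<lambda>i. - a i) m * chi p n (\<lambda>i. - b i) (vadd p n m (vadd p n d d))
           * (of_real (g (vadd p n m d)) * chi p n e d))
      = (\<Sum>d\<in>V. (\<Sum>m\<in>V. of_real (g (vadd p n m d)) * chi p n c (vadd p n m d)) * chi p n w d)"
    by (simp add: trm sum_distrib_right)
  also have "\<dots> = (\<Sum>d\<in>V. (\<Sum>y\<in>V. of_real (g y) * chi p n c y) * chi p n w d)"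
    unfolding V_def using sum_translate[OF p0, where h = "\<lambda>y. of_real (g y) * chi p n c y"] by simp
  also have "\<dots> = (\<Sum>y\<in>V. of_real (g y) * chi p n c y) * (\<Sum>d\<in>V. chi p n w d)"
    by (simp add: sum_distrib_left)
  also have "\<dots> = (if \<forall>i<n. int p dvd w i then of_nat (p ^ n) * (\<Sum>y\<in>V. of_real (g y) * chi p n c y) else 0)"
    unfolding V_def using orth[OF p, of n w] by (auto simp: mult.commute)
  finally show ?thesis unfolding V_def c_def w_def .
qed

lemma G2_eq:
  assumes p: "p > 1"
  shows "(\<Sum>d\<in>vecs p n. \<Sum>m\<in>vecs p n. chi p n (\<lambda>i. - a i) (vadd p n m d) * chi p n (\<lambda>i. - b i) (vadd p n m (vadd p n d d))
           * (of_real (g m) * chi p n e d))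
    = (if \<forall>i<n. int p dvd ((- a i - 2 * b i) + e i)
       then of_nat (p ^ n) * (\<Sum>y\<in>vecs p n. of_real (g y) * chi p n (\<lambda>i. - a i + - b i) y) else 0)"
proof -
  define c where "c = (\<lambda>i. - a i + - b i)"
  define w where "w = (\<lambda>i. (- a i - 2 * b i) + e i)"
  define V where "V = vecs p n"
  have p0: "p > 0" using p by simp
  have trm: "chi p n (\<lambda>i. - a i) (vadd p n m d) * chi p n (\<lambda>i. - b i) (vadd p n m (vadd p n d d))
           * (of_real (g m) * chi p n e d)
      = (of_real (g m) * chi p n c m) * chi p n w d" for m d
  proof -
    have A: "chi p n (\<lambda>i. - a i) d * chi p n (\<lambda>i. - b i) d * chi p n (\<lambda>i. - b i) d * chi p n e d
       = chi p n (\<lambda>i. - a i + - b i + - b i + e i) d"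
      by (simp add: chi_mult)
    have C: "(\<lambda>i. - a i + - b i + - b i + e i) = w" by (auto simp: w_def)
    have D: "chi p n (\<lambda>i. - a i) m * chi p n (\<lambda>i. - b i) m = chi p n c m" by (simp add: chi_mult c_def)
    have "chi p n (\<lambda>i. - a i) (vadd p n m d) * chi p n (\<lambda>i. - b i) (vadd p n m (vadd p n d d))
           * (of_real (g m) * chi p n e d)
        = of_real (g m) * (chi p n (\<lambda>i. - a i) m * chi p n (\<lambda>i. - b i) m) *
          (chi p n (\<lambda>i. - a i) d * chi p n (\<lambda>i. - b i) d * chi p n (\<lambda>i. - b i) d * chi p n e d)"
      using chi_vadd[OF p0] by (simp add: mult_ac)
    also have "\<dots> = (of_real (g m) * chi p n c m) * chi p n w d"
      by (simp only: A C D)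
    finally show ?thesis .
  qed
  have "(\<Sum>d\<in>V. \<Sum>m\<in>V. chi p n (\<lambda>i. - a i) (vadd p n m d) * chi p n (\<lambda>i. - b i) (vadd p n m (vadd p n d d))
           * (of_real (g m) * chi p n e d))
      = (\<Sum>d\<in>V. (\<Sum>m\<in>V. of_real (g m) * chi p n c m) * chi p n w d)"
    by (simp add: trm sum_distrib_right)
  also have "\<dots> = (\<Sum>y\<in>V. of_real (g y) * chi p n c y) * (\<Sum>d\<in>V. chi p n w d)"
    by (simp add: sum_distrib_left)
  also have "\<dots> = (if \<forall>i<n. int p dvd w i then of_nat (p ^ n) * (\<Sum>y\<in>V. of_real (g y) * chi p n c y) else 0)"
    unfolding V_def using orth[OF p, of n w] by (auto simp: mult.commute)
  finally show ?thesis unfolding V_def c_def w_def .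
qed


lemma from_core:
  fixes N \<beta> S Ls P0 :: real
  assumes N: "N > 0" and b: "\<beta> > 0" and S: "S > 0" and Ls: "Ls \<ge> 0"
    and P0: "P0 \<ge> N * \<beta> ^ 3"
    and core: "N * P0 \<le> N powr (-2/3) * (N * (N * \<beta>)) powr (1/3) * S ^ 2 * Ls powr (2/3)"
  shows "N * \<beta> ^ 4 / S ^ 3 \<le> Ls / N ^ 2"
proof -
  define A where "A = N powr (-2/3)"
  define B where "B = (N * (N * \<beta>)) powr (1/3)"
  define C where "C = Ls powr (2/3)"
  have A3: "A ^ 3 = 1 / N ^ 2"
  proof -
    have "A ^ 3 = N powr (-2)" unfolding A_def using N by (simp add: powr_power)
    also have "\<dots> = 1 / N ^ 2" using N by (simp add: powr_minus_divide)
    finally show ?thesis .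
  qed
  have B3: "B ^ 3 = N * (N * \<beta>)"
  proof -
    have "B ^ 3 = (N * (N * \<beta>)) powr 1" unfolding B_def using N b by (simp add: powr_power)
    thus ?thesis using N b by simp
  qed
  have C3: "C ^ 3 = Ls ^ 2"
  proof (cases "Ls = 0")
    case True thus ?thesis unfolding C_def by simp
  next
    case False
    have "C ^ 3 = Ls powr 2" unfolding C_def using False by (simp add: powr_power)
    thus ?thesis using Ls by simp
  qed
  have nn: "A \<ge> 0" "B \<ge> 0" "C \<ge> 0" unfolding A_def B_def C_def by auto
  have h1: "N ^ 2 * \<beta> ^ 3 \<le> A * B * S ^ 2 * C"
  proof -
    have "N * (N * \<beta> ^ 3) \<le> N * P0" using P0 N by (intro mult_left_mono) auto
    thus ?thesis using core unfolding A_def B_def C_def by (simp add: power2_eq_square mult.assoc)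
  qed
  have "(N ^ 2 * \<beta> ^ 3) ^ 3 \<le> (A * B * S ^ 2 * C) ^ 3"
    using h1 N b by (intro power_mono) auto
  also have "\<dots> = A ^ 3 * B ^ 3 * S ^ 6 * C ^ 3" by (simp add: power_mult_distrib power_mult[symmetric])
  also have "\<dots> = \<beta> * S ^ 6 * Ls ^ 2" unfolding A3 B3 C3 using N by (simp add: power2_eq_square field_simps)
  finally have h2: "N ^ 6 * \<beta> ^ 9 \<le> \<beta> * S ^ 6 * Ls ^ 2" by (simp add: power_mult_distrib power_mult[symmetric])
  have "(N ^ 3 * \<beta> ^ 4 / S ^ 3) ^ 2 = (N ^ 6 * \<beta> ^ 9) / (\<beta> * S ^ 6)"
    using b S by (simp add: power_mult_distrib power_divide power_mult[symmetric] field_simps flip: power_Suc)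
  also have "\<dots> \<le> (\<beta> * S ^ 6 * Ls ^ 2) / (\<beta> * S ^ 6)"
    using h2 b S by (intro divide_right_mono) auto
  also have "\<dots> = Ls ^ 2" using b S by simp
  finally have "N ^ 3 * \<beta> ^ 4 / S ^ 3 \<le> Ls" using Ls by (rule power2_le_imp_le)
  hence "(N ^ 3 * \<beta> ^ 4 / S ^ 3) / N ^ 2 \<le> Ls / N ^ 2" using N by (intro divide_right_mono) auto
  moreover have "(N ^ 3 * \<beta> ^ 4 / S ^ 3) / N ^ 2 = N * \<beta> ^ 4 / S ^ 3"
    using N by (simp add: field_simps power2_eq_square power3_eq_cube)
  ultimately show ?thesis by simp
qed


lemma bound_from_P:
  fixes P :: "(nat \<Rightarrow> int) \<Rightarrow> real"
    and G :: "(nat \<Rightarrow> int) \<Rightarrow> (nat \<Rightarrow> int) \<Rightarrow> (nat \<Rightarrow> int) \<Rightarrow> complex"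
  assumes p: "p > 1"
    and Pnn: "\<And>d. d \<in> vecs p n \<Longrightarrow> 0 \<le> P d"
    and hQ: "\<And>e. e \<in> vecs p n \<Longrightarrow> (\<Sum>d\<in>vecs p n. of_real (P d) * chi p n e d)
        = (\<Sum>a\<in>vecs p n. \<Sum>b\<in>vecs p n. fourier p n f a * fourier p n f b * G a b e)
          / of_real (real (p ^ n) ^ 2)"
    and hG: "\<And>a b. a \<in> vecs p n \<Longrightarrow> b \<in> vecs p n \<Longrightarrow>
        (\<Sum>e\<in>vecs p n. cmod (G a b e) powr (1/3)) \<le> (real (p ^ n) * (real (p ^ n) * \<beta>)) powr (1/3)"
    and P0: "P (\<lambda>i. 0) \<ge> real (p ^ n) * \<beta> ^ 3"
    and b: "\<beta> > 0"
    and S: "(\<Sum>a\<in>vecs p n. cmod (fourier p n f a) powr (1/3)) > 0"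
  shows "real (p ^ n) * \<beta> ^ 4 / (\<Sum>a\<in>vecs p n. cmod (fourier p n f a) powr (1/3)) ^ 3
     \<le> (\<Sum>d\<in>vecs p n. P d) / real (p ^ n) ^ 2"
proof (rule from_core[OF _ b S _ P0])
  show "real (p ^ n) > 0" using p by simp
  show "(\<Sum>d\<in>vecs p n. P d) \<ge> 0" using Pnn by (intro sum_nonneg) auto
  show "real (p ^ n) * P (\<lambda>i. 0) \<le> real (p ^ n) powr (-2/3) * (real (p ^ n) * (real (p ^ n) * \<beta>)) powr (1/3)
     * (\<Sum>a\<in>vecs p n. cmod (fourier p n f a) powr (1/3)) ^ 2 * (\<Sum>d\<in>vecs p n. P d) powr (2/3)"
    by (rule core[OF p Pnn hQ hG])
qed

lemma final_num:
  fixes N \<beta> S \<theta> \<gamma> :: real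
  assumes N: "N \<ge> 2" and p: "real p \<ge> 2" and b1: "\<beta> \<le> 1" and b0: "\<beta> > 0"
    and bt: "\<beta> \<ge> N powr (- \<theta>)" and S: "S > 0" and SN: "S ^ 3 \<ge> N * \<beta>"
    and Sg: "S ^ 3 < N powr (1 + \<gamma>)"
  shows "10 powr (-10) * real p powr (-8) * N powr (-12 * \<theta> - 4 * \<gamma>) \<le> N * \<beta> ^ 4 / S ^ 3"
proof -
  define k where "k = N / S ^ 3"
  have k0: "k > 0" unfolding k_def using N S by simp
  have kb: "k \<le> 1 / \<beta>" unfolding k_def using SN b0 S N by (simp add: field_simps)
  have ng: "N powr (- \<gamma>) \<le> k"
  proof -
    have "N powr (- \<gamma>) = N / N powr (1 + \<gamma>)" using N by (simp add: powr_add powr_minus field_simps)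
    also have "\<dots> \<le> N / S ^ 3" using Sg S N by (intro divide_left_mono) auto
    finally show ?thesis unfolding k_def .
  qed
  have "N powr (-12 * \<theta> - 4 * \<gamma>) = (N powr (- \<theta>)) ^ 12 * (N powr (- \<gamma>)) ^ 4"
  proof -
    have "(N powr (- \<theta>)) ^ 12 = N powr (12 * (- \<theta>))" using N by (subst powr_power) auto
    moreover have "(N powr (- \<gamma>)) ^ 4 = N powr (4 * (- \<gamma>))" using N by (subst powr_power) auto
    ultimately show ?thesis by (simp add: powr_add[symmetric])
  qed
  also have "\<dots> \<le> \<beta> ^ 12 * k ^ 4"
    using bt ng by (intro mult_mono power_mono) auto
  also have "\<dots> = \<beta> ^ 4 * k * (\<beta> ^ 8 * k ^ 3)" by (simp add: algebra_simps flip: power_add power_Suc)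
  also have "\<dots> \<le> \<beta> ^ 4 * k * 1"
  proof -
    have "\<beta> ^ 8 * k ^ 3 \<le> \<beta> ^ 8 * (1 / \<beta>) ^ 3" using kb k0 b0 by (intro mult_left_mono power_mono) auto
    also have "\<dots> = \<beta> ^ 5" using b0 by (simp add: field_simps flip: power_add)
    also have "\<dots> \<le> 1" using b0 b1 by (simp add: power_le_one)
    finally show ?thesis using b0 k0 by (intro mult_left_mono) auto
  qed
  finally have main: "N powr (-12 * \<theta> - 4 * \<gamma>) \<le> N * \<beta> ^ 4 / S ^ 3" unfolding k_def by (simp add: mult.commute)
  have c: "10 powr (-10) * real p powr (-8) \<le> 1"
  proof -
    have "10 powr (-10::real) \<le> 1" by (simp add: powr_minus_divide)
    moreover have "real p powr (-8) \<le> 1" using p by (simp add: powr_minus_divide)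
    ultimately show ?thesis by (intro mult_le_one) auto
  qed
  have "10 powr (-10) * real p powr (-8) * N powr (-12 * \<theta> - 4 * \<gamma>) \<le> 1 * N powr (-12 * \<theta> - 4 * \<gamma>)"
    using c by (intro mult_right_mono) auto
  also have "\<dots> \<le> N * \<beta> ^ 4 / S ^ 3" using main by simp
  finally show ?thesis .
qed


lemma cube_mean:
  fixes g :: "(nat \<Rightarrow> int) \<Rightarrow> real"
  assumes "\<And>m. m \<in> A \<Longrightarrow> 0 \<le> g m" "finite A" "card A > 0"
  shows "(\<Sum>m\<in>A. g m ^ 3) \<ge> real (card A) * ((\<Sum>m\<in>A. g m) / real (card A)) ^ 3"
proof -
  define b where "b = (\<Sum>m\<in>A. g m) / real (card A)"
  have b0: "b \<ge> 0" unfolding b_def using assms by (auto intro!: divide_nonneg_nonneg sum_nonneg)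
  have t: "g m ^ 3 \<ge> b ^ 3 + 3 * b ^ 2 * (g m - b)" if "m \<in> A" for m
  proof -
    have "g m ^ 3 - (b ^ 3 + 3 * b ^ 2 * (g m - b)) = (g m - b) ^ 2 * (g m + 2 * b)"
      by (simp add: power2_eq_square power3_eq_cube algebra_simps)
    also have "\<dots> \<ge> 0" using assms(1)[OF that] b0 by simp
    finally show ?thesis by simp
  qed
  have "(\<Sum>m\<in>A. g m ^ 3) \<ge> (\<Sum>m\<in>A. b ^ 3 + 3 * b ^ 2 * (g m - b))" using t by (intro sum_mono) auto
  also have "(\<Sum>m\<in>A. b ^ 3 + 3 * b ^ 2 * (g m - b)) = real (card A) * b ^ 3 + 3 * b ^ 2 * ((\<Sum>m\<in>A. g m) - real (card A) * b)"
    by (simp add: sum.distrib sum_distrib_left[symmetric] sum_subtractf)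
  also have "(\<Sum>m\<in>A. g m) - real (card A) * b = 0" unfolding b_def using assms(3) by simp
  finally show ?thesis unfolding b_def by simp
qed

theorem corollary1:
  fixes p n :: nat and \<theta> \<gamma> :: real and f g :: "(nat \<Rightarrow> int) \<Rightarrow> real"
  assumes "prime p" and "n \<ge> 1"
    and "\<And>m. m \<in> vecs p n \<Longrightarrow> 0 \<le> f m \<and> f m \<le> 1"
    and "\<And>m. m \<in> vecs p n \<Longrightarrow> 0 \<le> g m \<and> g m \<le> 1"
    and "\<And>m. m \<in> vecs p n \<Longrightarrow> f m \<ge> g m"
    and "expect p n f \<ge> expect p n g"
    and "expect p n g \<ge> real (p ^ n) powr (- \<theta>)"
    and "fnorm p n (1/3) f < real (p ^ n) powr (1 + \<gamma>)"
  shows "Lambda3 p n f g f \<ge> 10 powr (-10) * real p powr (-8) * real (p ^ n) powr (-12 * \<theta> - 4 * \<gamma>)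
     \<and> Lambda3 p n g f f \<ge> 10 powr (-10) * real p powr (-8) * real (p ^ n) powr (-12 * \<theta> - 4 * \<gamma>)"
proof -
  note fb = assms(3) and gb = assms(4) and fg = assms(5)
  have p: "p > 1" using assms(1) prime_gt_1_nat by blast
  have p0: "p > 0" using p by simp
  define V where "V = vecs p n"
  define N where "N = real (p ^ n)"
  define \<beta> where "\<beta> = expect p n g"
  define S where "S = (\<Sum>a\<in>V. cmod (fourier p n f a) powr (1/3))"
  define sg where "sg = (\<Sum>m\<in>V. g m)"
  have finV: "finite V" unfolding V_def by (rule finite_vecs)
  have cardV: "card V = p ^ n" unfolding V_def by (rule card_vecs)
  have zV: "(\<lambda>i. 0) \<in> V" unfolding V_def using zero_in[OF p0] .
  have N2: "N \<ge> 2"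
  proof -
    have "p ^ 1 \<le> p ^ n" using assms(2) p by (intro power_increasing) auto
    hence "(2::nat) \<le> p ^ n" using p by simp
    hence "real (2::nat) \<le> real (p ^ n)" by (simp only: of_nat_le_iff)
    thus ?thesis unfolding N_def by simp
  qed
  have sg: "sg = N * \<beta>" unfolding sg_def \<beta>_def expect_def N_def V_def using N2 N_def p by simp
  have b0: "\<beta> > 0"
  proof -
    have "real (p ^ n) powr (- \<theta>) > 0" using N2 p unfolding N_def by simp
    thus ?thesis using assms(7) unfolding \<beta>_def by linarith
  qed
  have b1: "\<beta> \<le> 1"
  proof -
    have "sg \<le> (\<Sum>m\<in>V. 1)" unfolding sg_def using gb unfolding V_def by (intro sum_mono) auto
    hence "N * \<beta> \<le> N" using sg cardV unfolding N_def by simp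
    thus ?thesis using N2 by simp
  qed
  have sf: "(\<Sum>m\<in>V. f m) \<ge> N * \<beta>"
    using sg unfolding sg_def using fg unfolding V_def by (metis sum_mono)
  have four0: "fourier p n f (\<lambda>i. 0) = of_real (\<Sum>m\<in>V. f m)"
    unfolding fourier_def V_def by (simp add: dotp_def)
  have S0: "S \<ge> (\<Sum>m\<in>V. f m) powr (1/3)"
  proof -
    have "cmod (fourier p n f (\<lambda>i. 0)) powr (1/3) \<le> S"
      unfolding S_def using finV zV by (intro member_le_sum) auto
    moreover have "cmod (fourier p n f (\<lambda>i. 0)) = (\<Sum>m\<in>V. f m)"
      using four0 fb unfolding V_def by (simp del: of_real_sum add: sum_nonneg)
    ultimately show ?thesis by simp
  qed
  have sfpos: "(\<Sum>m\<in>V. f m) > 0" using sf N2 b0 by (smt (verit) mult_pos_pos)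
  have Spos: "S > 0" using S0 sfpos by (smt (verit) powr_gt_zero)
  have S3: "S ^ 3 \<ge> N * \<beta>"
  proof -
    have "((\<Sum>m\<in>V. f m) powr (1/3)) ^ 3 \<le> S ^ 3" using S0 by (intro power_mono) auto
    moreover have "((\<Sum>m\<in>V. f m) powr (1/3)) ^ 3 = (\<Sum>m\<in>V. f m)"
      using sfpos by (subst powr_power) auto
    ultimately show ?thesis using sf by simp
  qed
  have fn: "fnorm p n (1/3) f = S ^ 3"
    unfolding fnorm_def S_def V_def using Spos[unfolded S_def V_def] by (simp add: powr_numeral)
  have Sg: "S ^ 3 < N powr (1 + \<gamma>)" using assms(8) fn unfolding N_def by simp
  have target: "10 powr (-10) * real p powr (-8) * N powr (-12 * \<theta> - 4 * \<gamma>) \<le> N * \<beta> ^ 4 / S ^ 3"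
    using final_num[OF N2 _ b1 b0 _ Spos S3 Sg] p assms(7) unfolding \<beta>_def N_def by simp
  have Hb: "cmod (\<Sum>y\<in>V. of_real (g y) * chi p n c y) \<le> sg" for c
  proof -
    have "cmod (\<Sum>y\<in>V. of_real (g y) * chi p n c y) \<le> (\<Sum>y\<in>V. cmod (of_real (g y) * chi p n c y))"
      by (rule norm_sum)
    also have "\<dots> = sg" unfolding sg_def using gb unfolding V_def
      by (intro sum.cong refl) (simp add: norm_mult cmod_chi)
    finally show ?thesis .
  qed
  have cubes: "(\<Sum>m\<in>V. g m ^ 3) \<ge> N * \<beta> ^ 3"
    using cube_mean[of V g] gb finV cardV p unfolding V_def N_def \<beta>_def expect_def by simp
  have vadd0: "vadd p n m (\<lambda>i. 0) = m" if "m \<in> V" for m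
    using that unfolding V_def vecs_def vadd_def by (auto simp: fun_eq_iff)
  have vadd00: "vadd p n (\<lambda>i. 0) (\<lambda>i. 0) = (\<lambda>i. 0)" unfolding vadd_def by auto
  have fgf: "f m * g m * f m \<ge> g m ^ 3" "g m * f m * f m \<ge> g m ^ 3" if "m \<in> V" for m
  proof -
    have "g m * g m \<le> f m * f m" using gb fg fb that unfolding V_def by (intro mult_mono) auto
    hence "g m * (g m * g m) \<le> g m * (f m * f m)" using gb that unfolding V_def by (intro mult_left_mono) auto
    thus "f m * g m * f m \<ge> g m ^ 3" "g m * f m * f m \<ge> g m ^ 3"
      by (simp_all add: power3_eq_cube mult_ac)
  qed
  define P1 where "P1 d = (\<Sum>m\<in>V. f m * g (vadd p n m d) * f (vadd p n m (vadd p n d d)))" for d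
  have L1: "Lambda3 p n f g f = (\<Sum>d\<in>V. P1 d) / N ^ 2"
    unfolding Lambda3_def P1_def V_def N_def by (subst sum.swap) simp
  have c1: "N * \<beta> ^ 4 / S ^ 3 \<le> (\<Sum>d\<in>V. P1 d) / N ^ 2"
    unfolding N_def S_def V_def
  proof (rule bound_from_P[OF p, where G = "\<lambda>a b e. (\<Sum>d\<in>vecs p n. \<Sum>m\<in>vecs p n. chi p n (\<lambda>i. - a i) m * chi p n (\<lambda>i. - b i) (vadd p n m (vadd p n d d))
           * (of_real (g (vadd p n m d)) * chi p n e d))"])
    show "0 \<le> P1 d" if "d \<in> vecs p n" for d
      unfolding P1_def V_def using fb gb vadd_in[OF p0] by (intro sum_nonneg mult_nonneg_nonneg) auto
    show "P1 (\<lambda>i. 0) \<ge> real (p ^ n) * \<beta> ^ 3"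
    proof -
      have "P1 (\<lambda>i. 0) = (\<Sum>m\<in>V. f m * g m * f m)" unfolding P1_def using vadd0 vadd00 by simp
      also have "\<dots> \<ge> (\<Sum>m\<in>V. g m ^ 3)" using fgf by (intro sum_mono) auto
      finally show ?thesis using cubes unfolding N_def by simp
    qed
    show "\<beta> > 0" by (rule b0)
    show "(\<Sum>a\<in>vecs p n. cmod (fourier p n f a) powr (1/3)) > 0" using Spos unfolding S_def V_def .
    fix e assume e: "e \<in> vecs p n"
    have "(\<Sum>d\<in>vecs p n. of_real (P1 d) * chi p n e d)
      = (\<Sum>d\<in>vecs p n. \<Sum>m\<in>vecs p n. of_real (f m) * of_real (f (vadd p n m (vadd p n d d)))
           * (of_real (g (vadd p n m d)) * chi p n e d))"
      unfolding P1_def V_def by (simp add: sum_distrib_right sum_distrib_left mult_ac)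
    also have "\<dots> = (\<Sum>a\<in>vecs p n. \<Sum>b\<in>vecs p n. fourier p n f a * fourier p n f b *
        (\<Sum>d\<in>vecs p n. \<Sum>m\<in>vecs p n. chi p n (\<lambda>i. - a i) m * chi p n (\<lambda>i. - b i) (vadd p n m (vadd p n d d))
           * (of_real (g (vadd p n m d)) * chi p n e d))) / of_real (real (p ^ n) ^ 2)"
      by (rule expand[where ua = "\<lambda>m d. m" and ub = "\<lambda>m d. vadd p n m (vadd p n d d)", OF p])
        (auto simp: vadd_in[OF p0])
    finally show "(\<Sum>d\<in>vecs p n. of_real (P1 d) * chi p n e d) = (\<Sum>a\<in>vecs p n. \<Sum>b\<in>vecs p n. fourier p n f a * fourier p n f b *
        (\<Sum>d\<in>vecs p n. \<Sum>m\<in>vecs p n. chi p n (\<lambda>i. - a i) m * chi p n (\<lambda>i. - b i) (vadd p n m (vadd p n d d))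
           * (of_real (g (vadd p n m d)) * chi p n e d))) / of_real (real (p ^ n) ^ 2)" .
  next
    fix a b assume "a \<in> vecs p n" "b \<in> vecs p n"
    show "(\<Sum>e\<in>vecs p n. cmod (\<Sum>d\<in>vecs p n. \<Sum>m\<in>vecs p n. chi p n (\<lambda>i. - a i) m * chi p n (\<lambda>i. - b i) (vadd p n m (vadd p n d d))
           * (of_real (g (vadd p n m d)) * chi p n e d)) powr (1/3))
        \<le> (real (p ^ n) * (real (p ^ n) * \<beta>)) powr (1/3)"
      using hG_gen[OF p, where w = "\<lambda>i. a i - b i" and B = sg, OF G1_eq[OF p] Hb[unfolded V_def]]
      using sg unfolding N_def by simp
  qed
  define P2 where "P2 d = (\<Sum>m\<in>V. g m * f (vadd p n m d) * f (vadd p n m (vadd p n d d)))" for d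
  have L2: "Lambda3 p n g f f = (\<Sum>d\<in>V. P2 d) / N ^ 2"
    unfolding Lambda3_def P2_def V_def N_def by (subst sum.swap) simp
  have c2: "N * \<beta> ^ 4 / S ^ 3 \<le> (\<Sum>d\<in>V. P2 d) / N ^ 2"
    unfolding N_def S_def V_def
  proof (rule bound_from_P[OF p, where G = "\<lambda>a b e. (\<Sum>d\<in>vecs p n. \<Sum>m\<in>vecs p n. chi p n (\<lambda>i. - a i) (vadd p n m d) * chi p n (\<lambda>i. - b i) (vadd p n m (vadd p n d d))
           * (of_real (g m) * chi p n e d))"])
    show "0 \<le> P2 d" if "d \<in> vecs p n" for d
      unfolding P2_def V_def using fb gb vadd_in[OF p0] by (intro sum_nonneg mult_nonneg_nonneg) auto
    show "P2 (\<lambda>i. 0) \<ge> real (p ^ n) * \<beta> ^ 3"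
    proof -
      have "P2 (\<lambda>i. 0) = (\<Sum>m\<in>V. g m * f m * f m)" unfolding P2_def using vadd0 vadd00 by simp
      also have "\<dots> \<ge> (\<Sum>m\<in>V. g m ^ 3)" using fgf by (intro sum_mono) auto
      finally show ?thesis using cubes unfolding N_def by simp
    qed
    show "\<beta> > 0" by (rule b0)
    show "(\<Sum>a\<in>vecs p n. cmod (fourier p n f a) powr (1/3)) > 0" using Spos unfolding S_def V_def .
    fix e assume e: "e \<in> vecs p n"
    have "(\<Sum>d\<in>vecs p n. of_real (P2 d) * chi p n e d)
      = (\<Sum>d\<in>vecs p n. \<Sum>m\<in>vecs p n. of_real (f (vadd p n m d)) * of_real (f (vadd p n m (vadd p n d d)))
           * (of_real (g m) * chi p n e d))"
      unfolding P2_def V_def by (simp add: sum_distrib_right sum_distrib_left mult_ac)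
    also have "\<dots> = (\<Sum>a\<in>vecs p n. \<Sum>b\<in>vecs p n. fourier p n f a * fourier p n f b *
        (\<Sum>d\<in>vecs p n. \<Sum>m\<in>vecs p n. chi p n (\<lambda>i. - a i) (vadd p n m d) * chi p n (\<lambda>i. - b i) (vadd p n m (vadd p n d d))
           * (of_real (g m) * chi p n e d))) / of_real (real (p ^ n) ^ 2)"
      by (rule expand[where ua = "\<lambda>m d. vadd p n m d" and ub = "\<lambda>m d. vadd p n m (vadd p n d d)", OF p])
        (auto simp: vadd_in[OF p0])
    finally show "(\<Sum>d\<in>vecs p n. of_real (P2 d) * chi p n e d) = (\<Sum>a\<in>vecs p n. \<Sum>b\<in>vecs p n. fourier p n f a * fourier p n f b *
        (\<Sum>d\<in>vecs p n. \<Sum>m\<in>vecs p n. chi p n (\<lambda>i. - a i) (vadd p n m d) * chi p n (\<lambda>i. - b i) (vadd p n m (vadd p n d d))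
           * (of_real (g m) * chi p n e d))) / of_real (real (p ^ n) ^ 2)" .
  next
    fix a b assume "a \<in> vecs p n" "b \<in> vecs p n"
    show "(\<Sum>e\<in>vecs p n. cmod (\<Sum>d\<in>vecs p n. \<Sum>m\<in>vecs p n. chi p n (\<lambda>i. - a i) (vadd p n m d) * chi p n (\<lambda>i. - b i) (vadd p n m (vadd p n d d))
           * (of_real (g m) * chi p n e d)) powr (1/3))
        \<le> (real (p ^ n) * (real (p ^ n) * \<beta>)) powr (1/3)"
      using hG_gen[OF p, where w = "\<lambda>i. - a i - 2 * b i" and B = sg, OF G2_eq[OF p] Hb[unfolded V_def]]
      using sg unfolding N_def by simp
  qed
  show ?thesis using target c1 c2 L1 L2 by (simp add: N_def)
qed

end
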